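(* For every $n\ge0$, $\bigcap_{k=0}^\infty\mathcal L^{(n)}_k=\bigcap_{k=0}^\infty\mathcal G^{(n)}_k$.
   Context: Fix a prime $p$ and an embedding $\bar{\mathbb Q}\subset\mathbb C$; put $\xi_{p^n}=\exp(2\pi i/p^n)$ and $G_K=\mathrm{Gal}(\bar{\mathbb Q}/K)$. For $n\ge0$ let $V_n=\mathbb P^1_{\bar{\mathbb Q}}\setminus(\{0,\infty\}\cup\mu_{p^n})$ and let $\pi_1(V_n,\vec{01})$ be its pro-$p$ étale fundamental group based at the tangential base point $\vec{01}$; $G_{\mathbb Q}$ acts on it and on torsors of étale paths. It is free pro-$p$ on $x_n$ (standard loop around $0$) and $y_{k,n}$, $0\le k<p^n$ (standard loop around $\xi_{p^n}^k$). For an étale path $\gamma$ from $a$ to $b$ put $\mathfrak f_\gamma(\sigma)=\gamma^{-1}\cdot\sigma(\gamma)\in\pi_1(V_n,a)$, where $\beta\cdot\alpha$ means $\alpha$ followed by $\beta$. Let $\pi_n$ be the path from $\vec{01}$ to $\frac1{p^n}\vec{10}$ given by the real interval $[0,1]$. Let $\mathbb Q_p\{\{\mathcal Y_n\}\}$ be the algebra of noncommutative formal power series in $X_n,Y_{0,n},\dots,Y_{p^n-1,n}$ (indices of $Y_{i,n}$ read modulo $p^n$), $\mathcal M_n$ the set of nonempty monomials in these variables, $\deg w$ the total degree and $\deg_{\mathcal Y}w$ the degree in the variables $Y_{i,n}$, and $E_n:\pi_1(V_n,\vec{01})\to\mathbb Q_p\{\{\mathcal Y_n\}\}$ the continuous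 multiplicative map with $E_n(x_n)=\exp X_n$, $E_n(y_{k,n})=\exp Y_{k,n}$. For $\sigma\in G_{\mathbb Q}$ define $\lambda^{(n)}_w(\sigma)$ by $E_n(\mathfrak f_{\pi_n}(\sigma))=1+\sum_{w\in\mathcal M_n}\lambda^{(n)}_w(\sigma)w$. Depth filtration: $\mathcal L^{(n)}_0=G_{\mathbb Q(\mu_{p^\infty})}$ and for $k\ge1$, $\mathcal L^{(n)}_k=\{\sigma\in G_{\mathbb Q(\mu_{p^\infty})}:\ \lambda^{(n)}_w(\sigma)=0\text{ for all }w\in\mathcal M_n\text{ with }\deg_{\mathcal Y}w\le k\}$. Weight filtration: $\mathcal G^{(n)}_0=G_{\mathbb Q(\mu_{p^\infty})}$ and for $k\ge1$, $\mathcal G^{(n)}_k=\{\sigma\in\mathcal G^{(n)}_{k-1}:\ \lambda^{(n)}_w(\sigma)=0\text{ for all }w\in\mathcal M_n\text{ with }\deg w=k\}$. *)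

theory Defs
  imports Main "HOL-Computational_Algebra.Primes"
begin

text \<open>Letters of the alphabet of Q_p{{Y_n}}: X_n and Y_{i,n} (0 <= i < p^n).\<close>
datatype letter = LX | LY nat

definition letters :: "nat \<Rightarrow> nat \<Rightarrow> letter set" where
  "letters p n = insert LX (LY ` {..<p ^ n})"

definition monomials :: "nat \<Rightarrow> nat \<Rightarrow> letter list set" where
  "monomials p n = {w. w \<noteq> [] \<and> set w \<subseteq> letters p n}"

definition deg :: "letter list \<Rightarrow> nat" where
  "deg w = length w"

definition degY :: "letter list \<Rightarrow> nat" where
  "degY w = length (filter (\<lambda>l. l \<noteq> LX) w)"

text \<open>Depth filtration L^{(n)}_k.  Gam plays the role of G_{Q(mu_{p^infty})},
  lam n sigma w the coefficient lambda^{(n)}_w(sigma).\<close>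
definition depth_filt ::
  "nat \<Rightarrow> 'g set \<Rightarrow> (nat \<Rightarrow> 'g \<Rightarrow> letter list \<Rightarrow> 'b::zero) \<Rightarrow> nat \<Rightarrow> nat \<Rightarrow> 'g set" where
  "depth_filt p Gam lam n k =
     (if k = 0 then Gam
      else {\<sigma> \<in> Gam. \<forall>w \<in> monomials p n. degY w \<le> k \<longrightarrow> lam n \<sigma> w = 0})"

fun weight_filt ::
  "nat \<Rightarrow> 'g set \<Rightarrow> (nat \<Rightarrow> 'g \<Rightarrow> letter list \<Rightarrow> 'b::zero) \<Rightarrow> nat \<Rightarrow> nat \<Rightarrow> 'g set" where
  "weight_filt p Gam lam n 0 = Gam"
| "weight_filt p Gam lam n (Suc k) =
     {\<sigma> \<in> weight_filt p Gam lam n k.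
        \<forall>w \<in> monomials p n. deg w = Suc k \<longrightarrow> lam n \<sigma> w = 0}"

end

theory Submission
  imports Defs
begin

lemma wf_char:
  "weight_filt p Gam lam n k = {\<sigma> \<in> Gam. \<forall>w \<in> monomials p n. deg w \<le> k \<longrightarrow> lam n \<sigma> w = 0}"
proof (induction k)
  case 0
  then show ?case by (auto simp: monomials_def deg_def)
next
  case (Suc k)
  then show ?case by (auto simp: le_Suc_eq)
qed

lemma degY_le: "degY w \<le> deg w"
  by (simp add: degY_def deg_def)

theorem lemma3p3:
  fixes p :: nat and Gam :: "'g set" and lam :: "nat \<Rightarrow> 'g \<Rightarrow> letter list \<Rightarrow> 'b::zero"
  assumes "prime p"
  shows "\<forall>n. (\<Inter>k. depth_filt p Gam lam n k) = (\<Inter>k. weight_filt p Gam lam n k)"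
proof
  fix n
  have A: "(\<Inter>k. depth_filt p Gam lam n k) = {\<sigma> \<in> Gam. \<forall>w \<in> monomials p n. lam n \<sigma> w = 0}"
  proof (rule set_eqI, rule iffI)
    fix \<sigma> assume h: "\<sigma> \<in> (\<Inter>k. depth_filt p Gam lam n k)"
    have "\<sigma> \<in> Gam" using h[THEN InterD, of "depth_filt p Gam lam n 0"] by (simp add: depth_filt_def)
    moreover have "lam n \<sigma> w = 0" if w: "w \<in> monomials p n" for w
    proof -
      have "\<sigma> \<in> depth_filt p Gam lam n (Suc (deg w))" using h by blast
      thus ?thesis using w degY_le[of w] by (simp add: depth_filt_def)
    qed
    ultimately show "\<sigma> \<in> {\<sigma> \<in> Gam. \<forall>w \<in> monomials p n. lam n \<sigma> w = 0}" by blast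
  qed (auto simp: depth_filt_def)
  have B: "(\<Inter>k. weight_filt p Gam lam n k) = {\<sigma> \<in> Gam. \<forall>w \<in> monomials p n. lam n \<sigma> w = 0}"
  proof (rule set_eqI, rule iffI)
    fix \<sigma> assume h: "\<sigma> \<in> (\<Inter>k. weight_filt p Gam lam n k)"
    have "\<sigma> \<in> weight_filt p Gam lam n 0" using h by blast
    hence "\<sigma> \<in> Gam" by simp
    moreover have "lam n \<sigma> w = 0" if w: "w \<in> monomials p n" for w
    proof -
      have "\<sigma> \<in> weight_filt p Gam lam n (deg w)" using h by blast
      thus ?thesis using w by (simp add: wf_char)
    qed
    ultimately show "\<sigma> \<in> {\<sigma> \<in> Gam. \<forall>w \<in> monomials p n. lam n \<sigma> w = 0}" by blast
  qed (auto simp: wf_char)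
  show "(\<Inter>k. depth_filt p Gam lam n k) = (\<Inter>k. weight_filt p Gam lam n k)"
    using A B by simp
qed

end
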